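(* Let $\alpha\ge0$, $1<p<\infty$ and $\frac1p+\frac1{p'}=1$. For $t\ge0$ let $T_{t,p}f(s)=e^{-t/p}f(e^{-t}s)$ on $\mathcal{T}_p^{(\alpha)}(t^\alpha)$ and $T_{-t,p'}g(s)=e^{t/p'}g(e^{t}s)$ on $\mathcal{T}_{p'}^{(\alpha)}(t^\alpha)$. Then the semigroups $(T_{t,p})_{t\ge0}$ and $(T_{-t,p'})_{t\ge0}$ are dual to each other, i.e. $$\langle T_{t,p}f,g\rangle_\alpha=\langle f,T_{-t,p'}g\rangle_\alpha,\qquad f\in\mathcal{T}_p^{(\alpha)}(t^\alpha),\ g\in\mathcal{T}_{p'}^{(\alpha)}(t^\alpha),\ t\ge0.$$
   Context: $\mathcal{S}_+$ denotes the Schwartz class on $[0,\infty)$. For $\alpha>0$ and $f\in\mathcal{S}_+$, the Weyl fractional integral is $W_+^{-\alpha}f(t)=\frac{1}{\Gamma(\alpha)}\int_t^\infty (s-t)^{\alpha-1}f(s)\,ds$ ($t>0$), and the Weyl fractional derivative is $W_+^{\alpha}f(t)=(-1)^n\frac{d^n}{dt^n}W_+^{-(n-\alpha)}f(t)$ with $n=[\alpha]+1$; $W_+^0$ is the identity. For $\alpha>0$ and $1\le p<\infty$, $\mathcal{T}_p^{(\alpha)}(t^\alpha)$ is the completion of $\mathcal{S}_+$ in the norm $\|f\|_{\alpha,p}=\frac{1}{\Gamma(\alpha+1)}\left(\int_0^\infty |W_+^\alpha f(t)|^p t^{\alpha p}\,dt\right)^{1/p}$; $\mathcal{T}_p^{(0)}(t^0)=L^p(\mathbb{R}^+)$.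 For $p>1$ the dual of $\mathcal{T}_p^{(\alpha)}(t^\alpha)$ is $\mathcal{T}_{p'}^{(\alpha)}(t^\alpha)$ via the pairing $\langle f,g\rangle_\alpha=\frac{1}{\Gamma(\alpha+1)^2}\int_0^\infty W_+^\alpha f(t)\,W_+^\alpha g(t)\,t^{2\alpha}\,dt$. *)

theory Defs
  imports "HOL-Analysis.Analysis"
begin

text \<open>Schwartz class on [0,\<infinity>): smooth on [0,\<infinity>) (one-sided derivative at 0),
  every derivative rapidly decreasing.  Values on negative reals are irrelevant.\<close>
definition schwartz_plus :: "(real \<Rightarrow> real) set" where
  "schwartz_plus = {f. \<exists>D :: nat \<Rightarrow> real \<Rightarrow> real.
      (\<forall>s\<ge>0. D 0 s = f s) \<and>
      (\<forall>n. \<forall>s\<ge>0. (D n has_real_derivative D (Suc n) s) (at s within {0..})) \<and>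
      (\<forall>k n. \<exists>C. \<forall>s\<ge>0. \<bar>s ^ k * D n s\<bar> \<le> C)}"

definition weyl_int :: "real \<Rightarrow> (real \<Rightarrow> real) \<Rightarrow> real \<Rightarrow> real" where
  "weyl_int \<alpha> f t = (1 / Gamma \<alpha>) * (LBINT s:{t<..}. (s - t) powr (\<alpha> - 1) * f s)"

definition weyl_der :: "real \<Rightarrow> (real \<Rightarrow> real) \<Rightarrow> real \<Rightarrow> real" where
  "weyl_der \<alpha> f t =
     (if \<alpha> = 0 then f t
      else (let n = nat \<lfloor>\<alpha>\<rfloor> + 1 in
            (-1) ^ n * (deriv ^^ n) (weyl_int (real n - \<alpha>) f) t))"

definition tnorm :: "real \<Rightarrow> real \<Rightarrow> (real \<Rightarrow> real) \<Rightarrow> real" where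
  "tnorm \<alpha> p f = (1 / Gamma (\<alpha> + 1)) *
     (LBINT s:{0<..}. \<bar>weyl_der \<alpha> f s\<bar> powr p * s powr (\<alpha> * p)) powr (1 / p)"

definition tpair :: "real \<Rightarrow> (real \<Rightarrow> real) \<Rightarrow> (real \<Rightarrow> real) \<Rightarrow> real" where
  "tpair \<alpha> f g = (1 / (Gamma (\<alpha> + 1))\<^sup>2) *
     (LBINT s:{0<..}. weyl_der \<alpha> f s * weyl_der \<alpha> g s * s powr (2 * \<alpha>))"

text \<open>Cauchy sequences of Schwartz functions for the norm tnorm \<alpha> p;
  these represent the elements of the completion T_p^{(\<alpha>)}(t^\<alpha>).\<close>
definition tcauchy :: "real \<Rightarrow> real \<Rightarrow> (nat \<Rightarrow> real \<Rightarrow> real) \<Rightarrow> bool" where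
  "tcauchy \<alpha> p f \<longleftrightarrow> (\<forall>n. f n \<in> schwartz_plus) \<and>
     (\<forall>e>0. \<exists>N. \<forall>m\<ge>N. \<forall>n\<ge>N. tnorm \<alpha> p (\<lambda>s. f m s - f n s) < e)"

definition Tpos :: "real \<Rightarrow> real \<Rightarrow> (real \<Rightarrow> real) \<Rightarrow> real \<Rightarrow> real" where
  "Tpos t p f s = exp (- t / p) * f (exp (- t) * s)"

definition Tneg :: "real \<Rightarrow> real \<Rightarrow> (real \<Rightarrow> real) \<Rightarrow> real \<Rightarrow> real" where
  "Tneg t p' g s = exp (t / p') * g (exp t * s)"

end

theory Submission
  imports Defs
begin


lemma leb_to_lborel:
  fixes f :: "real \<Rightarrow> real"
  assumes "set_integrable lebesgue A f" "A \<in> sets borel" "continuous_on A f"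
  shows "set_integrable lborel A f"
proof -
  have m: "(\<lambda>x. indicator A x *\<^sub>R f x) \<in> borel_measurable lborel"
    using borel_measurable_continuous_on_indicator[OF assms(2,3)] by simp
  show ?thesis using assms(1) integrable_completion[OF m] unfolding set_integrable_def
    by simp
qed

lemma ker_int:
  assumes "0 < b" "b \<le> 1"
  shows "set_integrable lborel {0<..} (\<lambda>u::real. u powr (b-1) / (1+u)^2)"
proof (rule leb_to_lborel)
  show "continuous_on {0<..} (\<lambda>u::real. u powr (b-1) / (1+u)^2)"
    by (intro continuous_intros) auto
  show "({0<..}::real set) \<in> sets borel" by simp
  have "(\<lambda>u::real. u powr (b-1) / (1+u)^2) absolutely_integrable_on ({0<..1} \<union> {1..})"
  proof (rule set_integrable_Un)
    show "(\<lambda>u::real. u powr (b-1) / (1+u)^2) absolutely_integrable_on {0<..1}"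
      unfolding set_integrable_def
    proof (rule Bochner_Integration.integrable_bound [OF _ _ AE_I2])
      show "integrable lebesgue (\<lambda>x. indicat_real {0<..1} x *\<^sub>R x powr (b - 1))"
        using assms
        by (intro nonnegative_absolutely_integrable_1 [unfolded set_integrable_def] integrable_on_powr_from_0') auto
      show "(\<lambda>x. indicat_real {0<..1} x *\<^sub>R (x powr (b - 1) / (1 + x)^2)) \<in> borel_measurable lebesgue"
        by (intro measurable_completion)
           (auto intro!: borel_measurable_continuous_on_indicator continuous_intros)
      fix x :: real
      have "x powr (b - 1) / (1 + x)^2 \<le> x powr (b - 1) / 1" if "x \<ge> 0"
        using that by (intro divide_left_mono) (auto intro!: one_le_power)
      thus "norm (indicator {0<..1} x *\<^sub>R (x powr (b - 1) / (1 + x)^2)) \<le>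
               norm (indicator {0<..1} x *\<^sub>R x powr (b - 1))"
        by (simp_all add: indicator_def)
    qed
  next
    show "(\<lambda>u::real. u powr (b-1) / (1+u)^2) absolutely_integrable_on {1..}"
      unfolding set_integrable_def
    proof (rule Bochner_Integration.integrable_bound [OF _ _ AE_I2])
      have "(\<lambda>x::real. x powr (-2)) integrable_on {1..}"
        using has_integral_powr_to_inf[of "-2" 1] unfolding integrable_on_def by auto
      then show "integrable lebesgue (\<lambda>x. indicat_real {1..} x *\<^sub>R x powr (-2::real))"
        by (intro nonnegative_absolutely_integrable_1 [unfolded set_integrable_def]) auto
      show "(\<lambda>x. indicat_real {1..} x *\<^sub>R (x powr (b - 1) / (1 + x)^2)) \<in> borel_measurable lebesgue"
        by (intro measurable_completion)
           (auto intro!: borel_measurable_continuous_on_indicator continuous_intros)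
      fix x :: real
      have "x powr (b - 1) / (1 + x)^2 \<le> x powr (-2)" if "x \<ge> 1"
      proof -
        have "x powr (b - 1) \<le> 1" using that assms powr_mono[of "b-1" 0 x] by simp
        moreover have "1 / (1+x)^2 \<le> x powr (-2::real)"
          using that by (simp add: powr_minus_divide powr_realpow divide_simps power2_eq_square)
             (smt (verit) mult_mono)
        ultimately have "x powr (b - 1) / (1 + x)^2 \<le> 1 / (1+x)^2"
          using that by (intro divide_right_mono) auto
        thus ?thesis using \<open>1 / (1+x)^2 \<le> x powr (-2)\<close> by linarith
      qed
      thus "norm (indicator {1..} x *\<^sub>R (x powr (b - 1) / (1 + x)^2)) \<le>
               norm (indicator {1..} x *\<^sub>R x powr (-2::real))"
        by (auto simp: indicator_def)
    qed
  qed auto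
  also have "{0<..1} \<union> {1..} = ({0<..}::real set)" by auto
  finally show "set_integrable lebesgue {0<..} (\<lambda>u::real. u powr (b-1) / (1+u)^2)" .
qed

lemma subst_scale:
  fixes \<phi> :: "real \<Rightarrow> real"
  assumes "c > 0"
  shows "(LBINT s:{0<..}. \<phi> (c * s)) = (LBINT s:{0<..}. \<phi> s) / c"
proof -
  have "(LBINT s:{0<..}. \<phi> s) = \<bar>c\<bar> *\<^sub>R (\<integral>x. indicator {0<..} (0 + c * x) *\<^sub>R \<phi> (0 + c*x) \<partial>lborel)"
    unfolding set_lebesgue_integral_def
    by (rule lborel_integral_real_affine) (use assms in auto)
  also have "(\<lambda>x. indicator {0<..} (0 + c * x) *\<^sub>R \<phi> (0 + c*x)) = (\<lambda>x. indicator {0<..} x *\<^sub>R \<phi> (c*x))"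
    using assms by (auto simp: indicator_def zero_less_mult_iff fun_eq_iff)
  finally show ?thesis using assms unfolding set_lebesgue_integral_def by simp
qed

lemma subst_scale_int:
  fixes \<phi> :: "real \<Rightarrow> real"
  assumes "c > 0" "set_integrable lborel {0<..} \<phi>"
  shows "set_integrable lborel {0<..} (\<lambda>s. \<phi> (c * s))"
proof -
  have "integrable lborel (\<lambda>x. (\<lambda>x. indicator {0<..} x *\<^sub>R \<phi> x) (0 + c * x))"
    using assms unfolding set_integrable_def by (intro lborel_integrable_real_affine) auto
  also have "(\<lambda>x. (\<lambda>x. indicator {0<..} x *\<^sub>R \<phi> x) (0 + c * x)) = (\<lambda>x. indicator {0<..} x *\<^sub>R \<phi> (c*x))"
    using assms by (auto simp: indicator_def zero_less_mult_iff fun_eq_iff)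
  finally show ?thesis unfolding set_integrable_def .
qed

lemma subst_shift:
  fixes \<psi> :: "real \<Rightarrow> real"
  shows "(LBINT s:{t<..}. \<psi> s) = (LBINT u:{0<..}. \<psi> (t + u))"
proof -
  have "(LBINT s:{t<..}. \<psi> s) = \<bar>1\<bar> *\<^sub>R (\<integral>x. indicator {t<..} (t + 1 * x) *\<^sub>R \<psi> (t + 1*x) \<partial>lborel)"
    unfolding set_lebesgue_integral_def
    by (rule lborel_integral_real_affine) auto
  also have "(\<lambda>x. indicator {t<..} (t + 1 * x) *\<^sub>R \<psi> (t + 1*x)) = (\<lambda>x. indicator {0<..} x *\<^sub>R \<psi> (t + x))"
    by (auto simp: indicator_def fun_eq_iff)
  finally show ?thesis unfolding set_lebesgue_integral_def by simp
qed



definition sw :: "(nat \<Rightarrow> real \<Rightarrow> real) \<Rightarrow> (real \<Rightarrow> real) \<Rightarrow> bool" where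
  "sw D f \<longleftrightarrow> (\<forall>s\<ge>0. D 0 s = f s) \<and>
      (\<forall>n. \<forall>s\<ge>0. (D n has_real_derivative D (Suc n) s) (at s within {0..})) \<and>
      (\<forall>k n. \<exists>C. \<forall>s\<ge>0. \<bar>s ^ k * D n s\<bar> \<le> C)"

lemma schwartz_sw: "f \<in> schwartz_plus \<longleftrightarrow> (\<exists>D. sw D f)"
  unfolding schwartz_plus_def sw_def by blast

lemma sw_decay:
  assumes "sw D f"
  shows "\<exists>C. \<forall>s\<ge>0. \<bar>D n s\<bar> * (1+s)^K \<le> C"
proof -
  have "\<forall>j. \<exists>C. \<forall>s\<ge>0. \<bar>s ^ j * D n s\<bar> \<le> C" using assms unfolding sw_def by blast
  then obtain Cf where Cf: "\<And>j s. s \<ge> 0 \<Longrightarrow> \<bar>s ^ j * D n s\<bar> \<le> Cf j" by metis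
  have "\<bar>D n s\<bar> * (1+s)^K \<le> (\<Sum>j\<le>K. of_nat (K choose j) * Cf j)" if "s \<ge> 0" for s
  proof -
    have "(1+s)^K = (\<Sum>j\<le>K. of_nat (K choose j) * s^j)"
      using binomial_ring[of s 1 K] by (simp add: add.commute)
    hence "\<bar>D n s\<bar> * (1+s)^K = (\<Sum>j\<le>K. of_nat (K choose j) * \<bar>s^j * D n s\<bar>)"
      using that by (simp add: sum_distrib_left abs_mult mult_ac)
    also have "\<dots> \<le> (\<Sum>j\<le>K. of_nat (K choose j) * Cf j)"
      by (intro sum_mono mult_left_mono Cf that) auto
    finally show ?thesis .
  qed
  thus ?thesis by blast
qed

lemma sw_decay':
  assumes "sw D f"
  shows "\<exists>C. \<forall>s\<ge>0. \<bar>D n s\<bar> \<le> C / (1+s)^K"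
proof -
  obtain C where C: "\<And>s. s \<ge> 0 \<Longrightarrow> \<bar>D n s\<bar> * (1+s)^K \<le> C" using sw_decay[OF assms] by blast
  have "\<bar>D n s\<bar> \<le> C / (1+s)^K" if "s \<ge> 0" for s
    using C[OF that] that by (simp add: pos_le_divide_eq)
  thus ?thesis by blast
qed

lemma sw_deriv_within:
  "sw D f \<Longrightarrow> s \<ge> 0 \<Longrightarrow> (D n has_real_derivative D (Suc n) s) (at s within {0..})"
  unfolding sw_def by blast

lemma sw_deriv_at:
  assumes "sw D f" "s > 0"
  shows "(D n has_real_derivative D (Suc n) s) (at s)"
proof -
  have "at s within {0..} = at s"
    using assms(2) by (intro at_within_interior) simp
  thus ?thesis using sw_deriv_within[OF assms(1), of s n] assms(2) by simp
qed

lemma sw_cont: "sw D f \<Longrightarrow> continuous_on {0..} (D n)"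
  by (rule DERIV_continuous_on[OF sw_deriv_within]) auto

lemma sw_diff:
  assumes "sw D f" "sw E g"
  shows "sw (\<lambda>n s. D n s - E n s) (\<lambda>s. f s - g s)"
  unfolding sw_def
proof (intro conjI allI impI)
  fix s :: real assume "s \<ge> 0"
  thus "D 0 s - E 0 s = f s - g s" using assms unfolding sw_def by auto
next
  fix n and s :: real assume "s \<ge> 0"
  thus "((\<lambda>s. D n s - E n s) has_real_derivative D (Suc n) s - E (Suc n) s) (at s within {0..})"
    using assms by (intro DERIV_diff sw_deriv_within) auto
next
  fix k n
  obtain C1 where C1: "\<And>s. s \<ge> 0 \<Longrightarrow> \<bar>s ^ k * D n s\<bar> \<le> C1" using assms(1) unfolding sw_def by blast
  obtain C2 where C2: "\<And>s. s \<ge> 0 \<Longrightarrow> \<bar>s ^ k * E n s\<bar> \<le> C2" using assms(2) unfolding sw_def by blast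
  have "\<bar>s ^ k * (D n s - E n s)\<bar> \<le> C1 + C2" if "s \<ge> 0" for s
  proof -
    have "\<bar>s ^ k * (D n s - E n s)\<bar> \<le> \<bar>s ^ k * D n s\<bar> + \<bar>s ^ k * E n s\<bar>"
      by (simp add: right_diff_distrib abs_triangle_ineq4)
    thus ?thesis using C1[OF that] C2[OF that] by linarith
  qed
  thus "\<exists>C. \<forall>s\<ge>0. \<bar>s ^ k * (D n s - E n s)\<bar> \<le> C" by blast
qed

lemma sw_scale:
  assumes "sw D f" "c > 0"
  shows "sw (\<lambda>n s. a * c^n * D n (c * s)) (\<lambda>s. a * f (c * s))"
  unfolding sw_def
proof (intro conjI allI impI)
  fix s :: real assume "s \<ge> 0"
  thus "a * c^0 * D 0 (c * s) = a * f (c * s)" using assms unfolding sw_def by auto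
next
  fix n and s :: real assume s: "s \<ge> 0"
  have img: "(\<lambda>s. c * s) ` {0..} \<subseteq> {0..}" using assms by auto
  have "(D n has_real_derivative D (Suc n) (c * s)) (at (c * s) within (\<lambda>s. c * s) ` {0..})"
    by (rule DERIV_subset[OF sw_deriv_within[OF assms(1)] img]) (use s assms in auto)
  moreover have "((\<lambda>s. c * s) has_real_derivative c) (at s within {0..})"
    by (auto intro!: derivative_eq_intros)
  ultimately have "((\<lambda>s. D n s) \<circ> (\<lambda>s. c * s) has_real_derivative D (Suc n) (c * s) * c) (at s within {0..})"
    by (rule DERIV_image_chain)
  then have "((\<lambda>s. D n (c * s)) has_real_derivative D (Suc n) (c * s) * c) (at s within {0..})"
    by (simp add: o_def)
  from DERIV_cmult[OF this, of "a * c^n"]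
  show "((\<lambda>s. a * c^n * D n (c * s)) has_real_derivative a * c^Suc n * D (Suc n) (c * s)) (at s within {0..})"
    by (simp add: mult_ac)
next
  fix k n
  obtain C where C: "\<And>s. s \<ge> 0 \<Longrightarrow> \<bar>s ^ k * D n s\<bar> \<le> C" using assms(1) unfolding sw_def by blast
  have "\<bar>s ^ k * (a * c^n * D n (c * s))\<bar> \<le> \<bar>a\<bar> * c^n / c^k * C" if "s \<ge> 0" for s
  proof -
    have "\<bar>s ^ k * (a * c^n * D n (c * s))\<bar> = \<bar>a\<bar> * c^n / c^k * \<bar>(c * s) ^ k * D n (c * s)\<bar>"
      using assms(2) by (simp add: abs_mult power_mult_distrib field_simps)
    also have "\<dots> \<le> \<bar>a\<bar> * c^n / c^k * C"
      using assms(2) that by (intro mult_left_mono C) auto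
    finally show ?thesis .
  qed
  thus "\<exists>C. \<forall>s\<ge>0. \<bar>s ^ k * (a * c^n * D n (c * s))\<bar> \<le> C" by blast
qed



definition Kb :: "real \<Rightarrow> real" where
  "Kb b = (LBINT u:{0<..}. u powr (b-1) / (1+u)^2)"

lemma Kb_nonneg: "Kb b \<ge> 0"
  unfolding Kb_def set_lebesgue_integral_def
  by (intro Bochner_Integration.integral_nonneg) (auto simp: indicator_def)

lemma int_by_ker:
  fixes g :: "real \<Rightarrow> real"
  assumes "0 < b" "b \<le> 1" "continuous_on {0<..} g"
    and "\<And>u. u > 0 \<Longrightarrow> \<bar>g u\<bar> \<le> M * (u powr (b-1) / (1+u)^2)"
  shows "set_integrable lborel {0<..} g"
proof (rule set_integrable_bound[OF set_integrable_mult_right[OF ker_int[OF assms(1,2)]]])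
  show "set_borel_measurable lborel {0<..} g"
    unfolding set_borel_measurable_def
    using borel_measurable_continuous_on_indicator[OF _ assms(3)] by simp
  show "AE x in lborel. x \<in> {0<..} \<longrightarrow> norm (g x) \<le> norm (M * (x powr (b - 1) / (1 + x)^2))"
  proof (intro AE_I2 impI)
    fix x :: real assume "x \<in> {0<..}"
    hence "\<bar>g x\<bar> \<le> M * (x powr (b-1) / (1+x)^2)" using assms(4) by simp
    also have "\<dots> \<le> \<bar>M * (x powr (b-1) / (1+x)^2)\<bar>" by (rule abs_ge_self)
    finally show "norm (g x) \<le> norm (M * (x powr (b - 1) / (1 + x)^2))" by simp
  qed
qed

lemma int_bound_ker:
  fixes g :: "real \<Rightarrow> real"
  assumes "0 < b" "b \<le> 1" "continuous_on {0<..} g"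
    and "\<And>u. u > 0 \<Longrightarrow> \<bar>g u\<bar> \<le> M * (u powr (b-1) / (1+u)^2)"
  shows "\<bar>LBINT u:{0<..}. g u\<bar> \<le> M * Kb b"
proof -
  have gi: "set_integrable lborel {0<..} g" by (rule int_by_ker[OF assms])
  have "\<bar>LBINT u:{0<..}. g u\<bar> \<le> (LBINT u:{0<..}. \<bar>g u\<bar>)"
    using set_integral_norm_bound[OF gi] by simp
  also have "\<dots> \<le> (LBINT u:{0<..}. M * (u powr (b-1) / (1+u)^2))"
  proof (rule set_integral_mono)
    show "set_integrable lborel {0<..} (\<lambda>u. \<bar>g u\<bar>)" by (rule set_integrable_abs[OF gi])
    show "set_integrable lborel {0<..} (\<lambda>u. M * (u powr (b-1) / (1+u)^2))"
      by (rule set_integrable_mult_right) (rule ker_int[OF assms(1,2)])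
    fix u :: real assume "u \<in> {0<..}"
    thus "\<bar>g u\<bar> \<le> M * (u powr (b-1) / (1+u)^2)" using assms(4) by simp
  qed
  also have "\<dots> = M * Kb b" unfolding Kb_def by (rule set_integral_mult_right)
  finally show ?thesis .
qed

lemma pow_split:
  fixes s u :: real
  assumes "s \<ge> 0" "u \<ge> 0"
  shows "(1+s)^K * (1+u)^2 \<le> (1+(s+u))^(K+2)"
proof -
  have "(1+s)^K * (1+u)^2 \<le> (1+(s+u))^K * (1+(s+u))^2"
    using assms by (intro mult_mono power_mono) auto
  also have "\<dots> = (1+(s+u))^(K+2)" by (rule power_add[symmetric])
  finally show ?thesis .
qed

definition J :: "(nat \<Rightarrow> real \<Rightarrow> real) \<Rightarrow> real \<Rightarrow> nat \<Rightarrow> real \<Rightarrow> real" where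
  "J D b m s = (LBINT u:{0<..}. u powr (b-1) * D m (s+u))"

lemma J_integrand_cont:
  assumes "sw D f" "s \<ge> 0"
  shows "continuous_on {0<..} (\<lambda>u. u powr (b-1) * D m (s+u))"
proof (intro continuous_on_mult)
  show "continuous_on {0<..} (\<lambda>u::real. u powr (b-1))"
    by (intro continuous_intros) auto
  show "continuous_on {0<..} (\<lambda>u. D m (s+u))"
    by (rule continuous_on_compose2[OF sw_cont[OF assms(1)]]) (use assms(2) in \<open>auto intro!: continuous_intros\<close>)
qed

lemma pt_bound:
  fixes C s u :: real
  assumes "s \<ge> 0" "u > 0" "\<bar>d\<bar> \<le> C / (1+(s+u))^(K+2)"
  shows "\<bar>u powr (b-1) * d\<bar> \<le> (C / (1+s)^K) * (u powr (b-1) / (1+u)^2)"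
proof -
  have pos: "(1+(s+u))^(K+2) > 0" "(1+s)^K * (1+u)^2 > 0" using assms by auto
  have C0: "C \<ge> 0"
  proof -
    have "0 \<le> C / (1+(s+u))^(K+2)" using assms(3) by linarith
    thus ?thesis using pos by (simp add: zero_le_divide_iff)
  qed
  have "C / (1+(s+u))^(K+2) \<le> C / ((1+s)^K * (1+u)^2)"
    using pos C0 pow_split[of s u K] assms(1,2) by (intro divide_left_mono) auto
  hence "\<bar>d\<bar> \<le> C / ((1+s)^K * (1+u)^2)" using assms(3) by linarith
  hence le: "u powr (b-1) * \<bar>d\<bar> \<le> u powr (b-1) * (C / ((1+s)^K * (1+u)^2))"
    by (intro mult_left_mono) auto
  have "\<bar>u powr (b-1) * d\<bar> = u powr (b-1) * \<bar>d\<bar>" by (simp add: abs_mult)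
  also have "\<dots> \<le> u powr (b-1) * (C / ((1+s)^K * (1+u)^2))" by (rule le)
  also have "\<dots> = (C / (1+s)^K) * (u powr (b-1) / (1+u)^2)" by simp
  finally show ?thesis .
qed

lemma J_integrand_bound:
  assumes "sw D f" "s \<ge> 0"
  shows "\<exists>C. \<forall>u>0. \<bar>u powr (b-1) * D m (s+u)\<bar> \<le> (C / (1+s)^K) * (u powr (b-1) / (1+u)^2)"
proof -
  obtain C where C: "\<And>x. x \<ge> 0 \<Longrightarrow> \<bar>D m x\<bar> \<le> C / (1+x)^(K+2)" using sw_decay'[OF assms(1)] by blast
  have "\<bar>u powr (b-1) * D m (s+u)\<bar> \<le> (C / (1+s)^K) * (u powr (b-1) / (1+u)^2)" if "u > 0" for u
    using assms(2) that C[of "s+u"] by (intro pt_bound) auto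
  thus ?thesis by blast
qed

lemma J_int:
  assumes "sw D f" "s \<ge> 0" "0 < b" "b \<le> 1"
  shows "set_integrable lborel {0<..} (\<lambda>u. u powr (b-1) * D m (s+u))"
proof -
  obtain C where "\<forall>u>0. \<bar>u powr (b-1) * D m (s+u)\<bar> \<le> (C / (1+s)^0) * (u powr (b-1) / (1+u)^2)"
    using J_integrand_bound[OF assms(1,2)] by blast
  thus ?thesis using int_by_ker[OF assms(3,4) J_integrand_cont[OF assms(1,2)]] by blast
qed

lemma J_decay:
  assumes "sw D f" "0 < b" "b \<le> 1"
  shows "\<exists>C. \<forall>s\<ge>0. \<bar>J D b m s\<bar> \<le> C / (1+s)^K"
proof -
  obtain C where C: "\<And>x. x \<ge> 0 \<Longrightarrow> \<bar>D m x\<bar> \<le> C / (1+x)^(K+2)" using sw_decay'[OF assms(1)] by blast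
  have "\<bar>J D b m s\<bar> \<le> C * Kb b / (1+s)^K" if "s \<ge> 0" for s
  proof -
    have "\<bar>u powr (b-1) * D m (s+u)\<bar> \<le> (C / (1+s)^K) * (u powr (b-1) / (1+u)^2)" if "u > 0" for u
      using that \<open>s \<ge> 0\<close> C[of "s+u"] by (intro pt_bound) auto
    from int_bound_ker[OF assms(2,3) J_integrand_cont[OF assms(1) that] this]
    show ?thesis unfolding J_def by simp
  qed
  thus ?thesis by blast
qed



lemma taylor_est:
  assumes "sw D f" "0 < x - \<bar>h\<bar>" "u \<le> x - \<bar>h\<bar>" "u \<ge> 0"
    and C2: "\<forall>y\<ge>0. \<bar>D (Suc (Suc m)) y\<bar> \<le> C2 / (1+y)^2"
  shows "\<bar>D m (x+h) - D m x - h * D (Suc m) x\<bar> \<le> h^2/2 * (C2/(1+u)^2)"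
proof (cases "h = 0")
  case True thus ?thesis by simp
next
  case False
  have C20: "C2 \<ge> 0"
  proof -
    have "0 \<le> C2 / (1+0)^2" using C2 by (metis abs_ge_zero order_trans order_refl)
    thus ?thesis by simp
  qed
  have "\<exists>t. (if x + h < x then x + h < t \<and> t < x else x < t \<and> t < x + h) \<and>
    D m (x+h) = (\<Sum>k<2. (D (m+k) x / fact k) * (x + h - x)^k) + (D (m+2) t / fact 2) * (x + h - x)^2"
  proof (rule Taylor[where diff = "\<lambda>k. D (m+k)" and a = "x - \<bar>h\<bar>" and b = "x + \<bar>h\<bar>"])
    show "\<forall>k t. k < 2 \<and> x - \<bar>h\<bar> \<le> t \<and> t \<le> x + \<bar>h\<bar> \<longrightarrow> DERIV (D (m+k)) t :> D (m + Suc k) t"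
    proof (intro allI impI)
      fix k :: nat and t :: real assume "k < 2 \<and> x - \<bar>h\<bar> \<le> t \<and> t \<le> x + \<bar>h\<bar>"
      hence "t > 0" using assms(2) by linarith
      thus "DERIV (D (m+k)) t :> D (m + Suc k) t" using sw_deriv_at[OF assms(1), of t "m+k"] by simp
    qed
  qed (use False in auto)
  then obtain t where t: "(if x + h < x then x + h < t \<and> t < x else x < t \<and> t < x + h)"
    and eq: "D m (x+h) = (\<Sum>k<2. (D (m+k) x / fact k) * (x + h - x)^k) + (D (m+2) t / fact 2) * (x + h - x)^2"
    by blast
  have sum2: "(\<Sum>k<2. (D (m+k) x / fact k) * (x + h - x)^k) = D m x + D (Suc m) x * h"
    by (simp add: numeral_2_eq_2)
  have teq: "D m (x+h) - D m x - h * D (Suc m) x = D (Suc (Suc m)) t * h^2 / 2"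
    using eq sum2 by (simp add: numeral_2_eq_2 algebra_simps)
  have tu: "t \<ge> u" "t \<ge> 0" using t assms(2,3,4) by (auto split: if_splits)
  have "\<bar>D (Suc (Suc m)) t\<bar> \<le> C2 / (1+t)^2" using C2 tu by blast
  also have "\<dots> \<le> C2 / (1+u)^2"
    using C20 tu assms(4) by (intro divide_left_mono power_mono mult_pos_pos) auto
  finally have "\<bar>D (Suc (Suc m)) t\<bar> * h^2 / 2 \<le> C2 / (1+u)^2 * h^2 / 2"
    by (intro divide_right_mono mult_right_mono) auto
  thus ?thesis unfolding teq by (simp add: abs_mult mult_ac)
qed

lemma deriv_from_est:
  fixes F :: "real \<Rightarrow> real"
  assumes "\<delta> > 0" "K \<ge> 0"
    and "\<And>h. h \<noteq> 0 \<Longrightarrow> \<bar>h\<bar> < \<delta> \<Longrightarrow> \<bar>(F (s+h) - F s)/h - L\<bar> \<le> \<bar>h\<bar> * K"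
  shows "(F has_real_derivative L) (at s)"
  unfolding DERIV_def
proof (rule LIM_I)
  fix r :: real assume r: "r > 0"
  define d where "d = min \<delta> (r / (K+1))"
  have d: "d > 0" using assms r by (auto simp: d_def)
  have "\<forall>h. h \<noteq> 0 \<and> norm (h - 0) < d \<longrightarrow> norm ((F (s + h) - F s) / h - L) < r"
  proof (intro allI impI)
    fix h :: real assume h: "h \<noteq> 0 \<and> norm (h - 0) < d"
    hence hd: "\<bar>h\<bar> < \<delta>" "\<bar>h\<bar> < r / (K+1)" by (auto simp: d_def)
    have "\<bar>(F (s+h) - F s)/h - L\<bar> \<le> \<bar>h\<bar> * K" using assms(3) h hd by auto
    also have "\<dots> \<le> \<bar>h\<bar> * (K+1)" by (intro mult_left_mono) auto
    also have "\<dots> < r / (K+1) * (K+1)" using hd assms(2) by (intro mult_strict_right_mono) auto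
    also have "\<dots> = r" using assms(2) by simp
    finally show "norm ((F (s + h) - F s) / h - L) < r" by simp
  qed
  thus "\<exists>d>0. \<forall>h. h \<noteq> 0 \<and> norm (h - 0) < d \<longrightarrow> norm ((F (s + h) - F s) / h - L) < r"
    using d by blast
qed

lemma J_deriv:
  assumes "sw D f" "0 < b" "b \<le> 1" "s > 0"
  shows "(J D b m has_real_derivative J D b (Suc m) s) (at s)"
proof -
  obtain C2 where C2: "\<forall>y\<ge>0. \<bar>D (Suc (Suc m)) y\<bar> \<le> C2 / (1+y)^2"
    using sw_decay'[OF assms(1), of "Suc (Suc m)" 2] by blast
  have C20: "C2 \<ge> 0"
  proof -
    have "0 \<le> C2 / (1+0)^2" using C2 by (metis abs_ge_zero order_trans order_refl)
    thus ?thesis by simp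
  qed
  show ?thesis
  proof (rule deriv_from_est[where \<delta> = s and K = "C2/2 * Kb b"])
    show "0 < s" by fact
    show "0 \<le> C2/2 * Kb b" using C20 Kb_nonneg by simp
    fix h :: real assume h: "h \<noteq> 0" "\<bar>h\<bar> < s"
    define g where "g = (\<lambda>u. u powr (b-1) * (D m ((s+h)+u) - D m (s+u) - h * D (Suc m) (s+u)))"
    have i1: "set_integrable lborel {0<..} (\<lambda>u. u powr (b-1) * D m ((s+h)+u))"
      using h assms by (intro J_int) auto
    have i0: "set_integrable lborel {0<..} (\<lambda>u. u powr (b-1) * D m (s+u))"
      using h assms by (intro J_int) auto
    have i': "set_integrable lborel {0<..} (\<lambda>u. h * (u powr (b-1) * D (Suc m) (s+u)))"
      using h assms by (intro set_integrable_mult_right J_int) auto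
    have geq: "g = (\<lambda>u. u powr (b-1) * D m ((s+h)+u) - u powr (b-1) * D m (s+u) - h * (u powr (b-1) * D (Suc m) (s+u)))"
      unfolding g_def by (auto simp: fun_eq_iff algebra_simps)
    have Jeq: "(LBINT u:{0<..}. g u) = J D b m (s+h) - J D b m s - h * J D b (Suc m) s"
      unfolding geq J_def
      using set_integral_diff(2)[OF set_integral_diff(1)[OF i1 i0] i']
            set_integral_diff(2)[OF i1 i0] by simp
    have gc: "continuous_on {0<..} g"
    proof -
      have "continuous_on {0<..} (\<lambda>u. u powr (b-1) * D m ((s+h)+u) - u powr (b-1) * D m (s+u) - h * (u powr (b-1) * D (Suc m) (s+u)))"
        using h assms
        by (intro continuous_on_diff continuous_on_mult_left J_integrand_cont[OF assms(1)]) auto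
      thus ?thesis unfolding geq .
    qed
    have gb: "\<bar>g u\<bar> \<le> (h^2/2 * C2) * (u powr (b-1) / (1+u)^2)" if "u > 0" for u
    proof -
      have "\<bar>D m ((s+u)+h) - D m (s+u) - h * D (Suc m) (s+u)\<bar> \<le> h^2/2 * (C2/(1+u)^2)"
        using h that by (intro taylor_est[OF assms(1) _ _ _ C2]) auto
      moreover have "D m ((s+h)+u) = D m ((s+u)+h)" by (simp add: add_ac)
      ultimately have le: "u powr (b-1) * \<bar>D m ((s+h)+u) - D m (s+u) - h * D (Suc m) (s+u)\<bar>
          \<le> u powr (b-1) * (h^2/2 * (C2/(1+u)^2))"
        by (intro mult_left_mono) auto
      have "\<bar>g u\<bar> = u powr (b-1) * \<bar>D m ((s+h)+u) - D m (s+u) - h * D (Suc m) (s+u)\<bar>"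
        unfolding g_def by (simp add: abs_mult)
      also have "\<dots> \<le> u powr (b-1) * (h^2/2 * (C2/(1+u)^2))" by (rule le)
      also have "\<dots> = (h^2/2 * C2) * (u powr (b-1) / (1+u)^2)" by (simp add: field_simps)
      finally show ?thesis .
    qed
    have "\<bar>J D b m (s+h) - J D b m s - h * J D b (Suc m) s\<bar> \<le> (h^2/2 * C2) * Kb b"
      using int_bound_ker[OF assms(2,3) gc gb] unfolding Jeq .
    hence B: "\<bar>J D b m (s+h) - J D b m s - h * J D b (Suc m) s\<bar> / \<bar>h\<bar> \<le> (h^2/2 * C2) * Kb b / \<bar>h\<bar>"
      by (intro divide_right_mono) auto
    have "\<bar>(J D b m (s+h) - J D b m s)/h - J D b (Suc m) s\<bar>
        = \<bar>J D b m (s+h) - J D b m s - h * J D b (Suc m) s\<bar> / \<bar>h\<bar>"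
      using h by (simp add: field_simps abs_div)
    also have "\<dots> \<le> (h^2/2 * C2) * Kb b / \<bar>h\<bar>" by (rule B)
    also have "\<dots> = \<bar>h\<bar> * (C2/2 * Kb b)"
      using h by (simp add: power2_eq_square field_simps abs_mult_self_eq)
    finally show "\<bar>(J D b m (s+h) - J D b m s)/h - J D b (Suc m) s\<bar> \<le> \<bar>h\<bar> * (C2/2 * Kb b)" .
  qed
qed



lemma weyl_int_eq:
  assumes "sw D f" "s \<ge> 0"
  shows "weyl_int b f s = J D b 0 s / Gamma b"
proof -
  have "(LBINT t:{s<..}. (t - s) powr (b - 1) * f t) = (LBINT u:{0<..}. (s + u - s) powr (b - 1) * f (s + u))"
    by (rule subst_shift)
  also have "\<dots> = (LBINT u:{0<..}. u powr (b - 1) * D 0 (s + u))"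
    using assms unfolding sw_def by (intro set_lebesgue_integral_cong) auto
  finally show ?thesis unfolding weyl_int_def J_def by simp
qed

lemma iter_deriv:
  assumes "sw D f" "0 < b" "b \<le> 1"
  shows "\<forall>s>0. (deriv ^^ k) (weyl_int b f) s = J D b k s / Gamma b"
proof (induction k)
  case 0
  then show ?case using weyl_int_eq[OF assms(1)] by simp
next
  case (Suc k)
  show ?case
  proof (intro allI impI)
    fix s :: real assume s: "s > 0"
    have "((\<lambda>x. J D b k x / Gamma b) has_real_derivative J D b (Suc k) s / Gamma b) (at s)"
      by (intro DERIV_cdivide J_deriv[OF assms s])
    hence "((deriv ^^ k) (weyl_int b f) has_real_derivative J D b (Suc k) s / Gamma b) (at s)"
      by (rule has_field_derivative_transform_within_open[where S = "{0<..}"]) (use s Suc in auto)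
    thus "(deriv ^^ Suc k) (weyl_int b f) s = J D b (Suc k) s / Gamma b"
      by (simp add: DERIV_imp_deriv)
  qed
qed

definition NN :: "real \<Rightarrow> nat" where "NN \<alpha> = nat \<lfloor>\<alpha>\<rfloor> + 1"

lemma NN_bounds:
  assumes "\<alpha> > 0"
  shows "0 < real (NN \<alpha>) - \<alpha>" "real (NN \<alpha>) - \<alpha> \<le> 1"
proof -
  have e: "real (NN \<alpha>) = of_int \<lfloor>\<alpha>\<rfloor> + 1" using assms by (simp add: NN_def)
  have "of_int \<lfloor>\<alpha>\<rfloor> \<le> \<alpha>" by (rule of_int_floor_le)
  moreover have "\<alpha> < of_int \<lfloor>\<alpha>\<rfloor> + 1" by (rule real_of_int_floor_add_one_gt)
  ultimately show "0 < real (NN \<alpha>) - \<alpha>" "real (NN \<alpha>) - \<alpha> \<le> 1" unfolding e by linarith+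
qed

definition WD :: "(nat \<Rightarrow> real \<Rightarrow> real) \<Rightarrow> real \<Rightarrow> real \<Rightarrow> real" where
  "WD D \<alpha> s = (if \<alpha> = 0 then D 0 s
      else (-1)^(NN \<alpha>) * (J D (real (NN \<alpha>) - \<alpha>) (NN \<alpha>) s / Gamma (real (NN \<alpha>) - \<alpha>)))"

lemma weyl_der_eq:
  assumes "sw D f" "\<alpha> \<ge> 0" "s > 0"
  shows "weyl_der \<alpha> f s = WD D \<alpha> s"
proof (cases "\<alpha> = 0")
  case True
  thus ?thesis using assms unfolding weyl_der_def WD_def sw_def by auto
next
  case False
  hence a: "\<alpha> > 0" using assms by auto
  note nb = NN_bounds[OF a]
  have "(deriv ^^ NN \<alpha>) (weyl_int (real (NN \<alpha>) - \<alpha>) f) s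
      = J D (real (NN \<alpha>) - \<alpha>) (NN \<alpha>) s / Gamma (real (NN \<alpha>) - \<alpha>)"
    using iter_deriv[OF assms(1) nb] assms(3) by blast
  thus ?thesis using False unfolding weyl_der_def WD_def Let_def NN_def by simp
qed

lemma WD_cont:
  assumes "sw D f" "\<alpha> \<ge> 0"
  shows "continuous_on {0<..} (WD D \<alpha>)"
proof (cases "\<alpha> = 0")
  case True
  have "continuous_on {0<..} (D 0)" by (rule continuous_on_subset[OF sw_cont[OF assms(1)]]) auto
  thus ?thesis using True unfolding WD_def by simp
next
  case False
  hence a: "\<alpha> > 0" using assms by auto
  note nb = NN_bounds[OF a]
  have "continuous_on {0<..} (J D (real (NN \<alpha>) - \<alpha>) (NN \<alpha>))"
    by (rule DERIV_continuous_on[OF has_field_derivative_at_within[OF J_deriv[OF assms(1) nb]]]) auto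
  hence "continuous_on {0<..} (\<lambda>s. (-1)^(NN \<alpha>) * (J D (real (NN \<alpha>) - \<alpha>) (NN \<alpha>) s / Gamma (real (NN \<alpha>) - \<alpha>)))"
  proof -
    have "Gamma (real (NN \<alpha>) - \<alpha>) > 0" using nb by (intro Gamma_real_pos) auto
    thus ?thesis using \<open>continuous_on {0<..} (J D (real (NN \<alpha>) - \<alpha>) (NN \<alpha>))\<close>
      by (intro continuous_intros) auto
  qed
  thus ?thesis using False unfolding WD_def by simp
qed

lemma WD_decay:
  assumes "sw D f" "\<alpha> \<ge> 0"
  shows "\<exists>C. \<forall>s>0. \<bar>WD D \<alpha> s\<bar> \<le> C / (1+s)^K"
proof (cases "\<alpha> = 0")
  case True
  obtain C where "\<forall>s\<ge>0. \<bar>D 0 s\<bar> \<le> C / (1+s)^K" using sw_decay'[OF assms(1), of 0 K] by blast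
  then show ?thesis using True unfolding WD_def by (intro exI[of _ C]) auto
next
  case False
  hence a: "\<alpha> > 0" using assms by auto
  note nb = NN_bounds[OF a]
  obtain C where C: "\<And>s. s \<ge> 0 \<Longrightarrow> \<bar>J D (real (NN \<alpha>) - \<alpha>) (NN \<alpha>) s\<bar> \<le> C / (1+s)^K"
    using J_decay[OF assms(1) nb, of "NN \<alpha>" K] by blast
  have gpos: "Gamma (real (NN \<alpha>) - \<alpha>) > 0" using nb by (intro Gamma_real_pos) auto
  have "\<bar>WD D \<alpha> s\<bar> \<le> (C / Gamma (real (NN \<alpha>) - \<alpha>)) / (1+s)^K" if "s > 0" for s
  proof -
    have "\<bar>WD D \<alpha> s\<bar> = \<bar>J D (real (NN \<alpha>) - \<alpha>) (NN \<alpha>) s\<bar> / Gamma (real (NN \<alpha>) - \<alpha>)"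
      using False gpos unfolding WD_def by (simp add: abs_mult abs_div)
    also have "\<dots> \<le> (C / (1+s)^K) / Gamma (real (NN \<alpha>) - \<alpha>)"
      using C[of s] that gpos by (intro divide_right_mono) auto
    finally show ?thesis by (simp add: mult.commute)
  qed
  thus ?thesis by blast
qed

lemma J_diff:
  assumes "sw D f" "sw E g" "0 < b" "b \<le> 1" "s \<ge> 0"
  shows "J (\<lambda>n s. D n s - E n s) b m s = J D b m s - J E b m s"
proof -
  have "J (\<lambda>n s. D n s - E n s) b m s = (LBINT u:{0<..}. u powr (b-1) * D m (s+u) - u powr (b-1) * E m (s+u))"
    unfolding J_def by (simp add: algebra_simps)
  also have "\<dots> = J D b m s - J E b m s"
    unfolding J_def by (rule set_integral_diff(2)[OF J_int[OF assms(1,5,3,4)] J_int[OF assms(2,5,3,4)]])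
  finally show ?thesis .
qed

lemma WD_diff:
  assumes "sw D f" "sw E g" "\<alpha> \<ge> 0" "s > 0"
  shows "WD (\<lambda>n s. D n s - E n s) \<alpha> s = WD D \<alpha> s - WD E \<alpha> s"
proof (cases "\<alpha> = 0")
  case True thus ?thesis unfolding WD_def by simp
next
  case False
  hence a: "\<alpha> > 0" using assms by auto
  note nb = NN_bounds[OF a]
  have eq: "J (\<lambda>n s. D n s - E n s) (real (NN \<alpha>) - \<alpha>) (NN \<alpha>) s
      = J D (real (NN \<alpha>) - \<alpha>) (NN \<alpha>) s - J E (real (NN \<alpha>) - \<alpha>) (NN \<alpha>) s"
    using J_diff[OF assms(1,2) nb, of s "NN \<alpha>"] assms(4) by simp
  show ?thesis unfolding WD_def by (simp add: False eq diff_divide_distrib right_diff_distrib)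
qed

lemma J_scale:
  assumes "c > 0" "b > 0"
  shows "J (\<lambda>n s. a * c^n * D n (c * s)) b m s = a * c powr (real m - b) * J D b m (c * s)"
proof -
  define \<phi> where "\<phi> = (\<lambda>v. v powr (b-1) * D m (c * s + v))"
  have pt: "u powr (b-1) * (a * c^m * D m (c * (s+u))) = (a * c^m * c powr (1-b)) * \<phi> (c * u)" if "u > 0" for u
  proof -
    have "(c * u) powr (b-1) = c powr (b-1) * u powr (b-1)" using assms that by (simp add: powr_mult)
    moreover have "c powr (1-b) * c powr (b-1) = 1" using assms by (simp flip: powr_add)
    ultimately show ?thesis unfolding \<phi>_def by (simp add: algebra_simps)
  qed
  have "J (\<lambda>n s. a * c^n * D n (c * s)) b m s = (LBINT u:{0<..}. (a * c^m * c powr (1-b)) * \<phi> (c * u))"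
    unfolding J_def using pt by (intro set_lebesgue_integral_cong) auto
  also have "\<dots> = (a * c^m * c powr (1-b)) * ((LBINT v:{0<..}. \<phi> v) / c)"
    using subst_scale[OF assms(1), of \<phi>] by simp
  also have "(LBINT v:{0<..}. \<phi> v) = J D b m (c * s)" unfolding J_def \<phi>_def by simp
  also have "(a * c^m * c powr (1-b)) * (J D b m (c * s) / c) = a * (c powr real m * c powr (1-b) / c powr 1) * J D b m (c * s)"
    using assms by (simp add: powr_realpow)
  also have "c powr real m * c powr (1-b) / c powr 1 = c powr (real m - b)"
  proof -
    have "c powr real m * c powr (1-b) / c powr 1 = c powr (real m + (1-b) - 1)"
      by (simp only: powr_add[symmetric] powr_diff[symmetric])
    also have "real m + (1-b) - 1 = real m - b" by simp
    finally show ?thesis .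
  qed
  finally show ?thesis by simp
qed

lemma WD_scale:
  assumes "c > 0" "\<alpha> \<ge> 0"
  shows "WD (\<lambda>n s. a * c^n * D n (c * s)) \<alpha> s = a * c powr \<alpha> * WD D \<alpha> (c * s)"
proof (cases "\<alpha> = 0")
  case True thus ?thesis using assms unfolding WD_def by simp
next
  case False
  hence a: "\<alpha> > 0" using assms by auto
  note nb = NN_bounds[OF a]
  have "real (NN \<alpha>) - (real (NN \<alpha>) - \<alpha>) = \<alpha>" by simp
  thus ?thesis using False J_scale[OF assms(1) nb(1), of a D "NN \<alpha>" s]
    unfolding WD_def by (simp add: algebra_simps)
qed



definition nF :: "real \<Rightarrow> (real \<Rightarrow> real) \<Rightarrow> real" where
  "nF q F = (LBINT s:{0<..}. \<bar>F s\<bar> powr q) powr (1/q)"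

definition good :: "real \<Rightarrow> (real \<Rightarrow> real) \<Rightarrow> bool" where
  "good q F \<longleftrightarrow> set_borel_measurable lborel {0<..} F \<and> set_integrable lborel {0<..} (\<lambda>s. \<bar>F s\<bar> powr q)"

lemma nF_nonneg: "nF q F \<ge> 0" unfolding nF_def by simp

lemma meas_mult:
  fixes F G :: "real \<Rightarrow> real"
  assumes "set_borel_measurable lborel A F" "set_borel_measurable lborel A G"
  shows "set_borel_measurable lborel A (\<lambda>s. F s * G s)"
proof -
  have m1: "(\<lambda>x. indicator A x *\<^sub>R F x) \<in> borel_measurable borel"
    using assms(1) unfolding set_borel_measurable_def by simp
  have m2: "(\<lambda>x. indicator A x *\<^sub>R G x) \<in> borel_measurable borel"
    using assms(2) unfolding set_borel_measurable_def by simp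
  have "(\<lambda>x. (indicator A x *\<^sub>R F x) * (indicator A x *\<^sub>R G x)) \<in> borel_measurable borel"
    using borel_measurable_times[OF m1 m2] by simp
  hence "(\<lambda>x. (indicator A x *\<^sub>R F x) * (indicator A x *\<^sub>R G x)) \<in> borel_measurable lborel"
    by simp
  moreover have "(\<lambda>x. (indicator A x *\<^sub>R F x) * (indicator A x *\<^sub>R G x)) = (\<lambda>x. indicator A x *\<^sub>R (F x * G x))"
    by (auto simp: fun_eq_iff indicator_def)
  ultimately show ?thesis unfolding set_borel_measurable_def by simp
qed

lemma holder_int:
  assumes "p > 1" "q > 1" "1/p + 1/q = 1" "good p F" "good q G"
  shows "set_integrable lborel {0<..} (\<lambda>s. F s * G s)"
proof (rule set_integrable_bound)
  show "set_integrable lborel {0<..} (\<lambda>s. \<bar>F s\<bar> powr p / p + \<bar>G s\<bar> powr q / q)"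
    using assms unfolding good_def by (intro set_integral_add(1) set_integrable_divide) auto
  show "set_borel_measurable lborel {0<..} (\<lambda>s. F s * G s)"
    using assms unfolding good_def by (intro meas_mult) auto
  show "AE x in lborel. x \<in> {0<..} \<longrightarrow> norm (F x * G x) \<le> norm (\<bar>F x\<bar> powr p / p + \<bar>G x\<bar> powr q / q)"
  proof (intro AE_I2 impI)
    fix x :: real
    have "\<bar>F x\<bar> * \<bar>G x\<bar> \<le> \<bar>F x\<bar> powr p / p + \<bar>G x\<bar> powr q / q"
      using assms by (intro Youngs_inequality) auto
    also have "\<dots> \<le> norm (\<bar>F x\<bar> powr p / p + \<bar>G x\<bar> powr q / q)" by simp
    finally show "norm (F x * G x) \<le> norm (\<bar>F x\<bar> powr p / p + \<bar>G x\<bar> powr q / q)"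
      by (simp add: abs_mult)
  qed
qed

lemma zero_norm_int:
  assumes "good p F" "p > 0" "(LBINT s:{0<..}. \<bar>F s\<bar> powr p) = 0"
    and "set_borel_measurable lborel {0<..} (\<lambda>s. F s * G s)"
  shows "(LBINT s:{0<..}. F s * G s) = 0"
proof -
  have "integral\<^sup>L lborel (\<lambda>s. indicator {0<..} s *\<^sub>R \<bar>F s\<bar> powr p) = 0"
    using assms(3) unfolding set_lebesgue_integral_def .
  hence "AE s in lborel. indicator {0<..} s *\<^sub>R \<bar>F s\<bar> powr p = 0"
    using assms(1) unfolding good_def set_integrable_def
    by (subst (asm) integral_nonneg_eq_0_iff_AE) (auto simp: indicator_def)
  hence ae: "AE s in lborel. indicator {0<..} s *\<^sub>R (F s * G s) = 0"
    by eventually_elim (auto simp: indicator_def split: if_splits)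
  have "integral\<^sup>L lborel (\<lambda>s. indicator {0<..} s *\<^sub>R (F s * G s)) = 0"
    by (rule integral_eq_zero_AE[OF ae])
  thus ?thesis unfolding set_lebesgue_integral_def by simp
qed

lemma holder:
  assumes pq: "p > 1" "q > 1" "1/p + 1/q = 1" and gF: "good p F" and gG: "good q G"
  shows "\<bar>LBINT s:{0<..}. F s * G s\<bar> \<le> nF p F * nF q G"
proof -
  define A where "A = (LBINT s:{0<..}. \<bar>F s\<bar> powr p)"
  define B where "B = (LBINT s:{0<..}. \<bar>G s\<bar> powr q)"
  have A0: "A \<ge> 0" unfolding A_def set_lebesgue_integral_def
    by (intro Bochner_Integration.integral_nonneg) (auto simp: indicator_def)
  have B0: "B \<ge> 0" unfolding B_def set_lebesgue_integral_def
    by (intro Bochner_Integration.integral_nonneg) (auto simp: indicator_def)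
  have mFG: "set_borel_measurable lborel {0<..} (\<lambda>s. F s * G s)"
    using gF gG unfolding good_def by (intro meas_mult) auto
  have mGF: "set_borel_measurable lborel {0<..} (\<lambda>s. G s * F s)"
    using gF gG unfolding good_def by (intro meas_mult) auto
  show ?thesis
  proof (cases "A = 0 \<or> B = 0")
    case True
    hence "(LBINT s:{0<..}. F s * G s) = 0"
    proof
      assume "A = 0" thus ?thesis using zero_norm_int[OF gF _ _ mFG] pq unfolding A_def by simp
    next
      assume "B = 0"
      hence "(LBINT s:{0<..}. G s * F s) = 0" using zero_norm_int[OF gG _ _ mGF] pq unfolding B_def by simp
      thus ?thesis by (simp add: mult.commute)
    qed
    thus ?thesis using nF_nonneg[of p F] nF_nonneg[of q G] by simp
  next
    case False
    hence Ap: "A > 0" and Bp: "B > 0" using A0 B0 by auto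
    define a where "a = A powr (1/p)"
    define b where "b = B powr (1/q)"
    have ap: "a > 0" and bp: "b > 0" using Ap Bp unfolding a_def b_def by auto
    have apA: "a powr p = A" using Ap pq unfolding a_def by (simp add: powr_powr)
    have bqB: "b powr q = B" using Bp pq unfolding b_def by (simp add: powr_powr)
    have pt: "\<bar>F s * G s\<bar> \<le> (a*b/(p*A)) * \<bar>F s\<bar> powr p + (a*b/(q*B)) * \<bar>G s\<bar> powr q" for s
    proof -
      have "(\<bar>F s\<bar>/a) * (\<bar>G s\<bar>/b) \<le> (\<bar>F s\<bar>/a) powr p / p + (\<bar>G s\<bar>/b) powr q / q"
        using pq ap bp by (intro Youngs_inequality) auto
      also have "\<dots> = \<bar>F s\<bar> powr p / (p*A) + \<bar>G s\<bar> powr q / (q*B)"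
        by (simp add: powr_divide apA bqB mult.commute)
      finally have "(\<bar>F s\<bar>/a) * (\<bar>G s\<bar>/b) * (a*b) \<le> (\<bar>F s\<bar> powr p / (p*A) + \<bar>G s\<bar> powr q / (q*B)) * (a*b)"
        using ap bp by (intro mult_right_mono) auto
      moreover have "(\<bar>F s\<bar>/a) * (\<bar>G s\<bar>/b) * (a*b) = \<bar>F s * G s\<bar>" using ap bp by (simp add: abs_mult)
      moreover have "(\<bar>F s\<bar> powr p / (p*A) + \<bar>G s\<bar> powr q / (q*B)) * (a*b)
          = (a*b/(p*A)) * \<bar>F s\<bar> powr p + (a*b/(q*B)) * \<bar>G s\<bar> powr q"
        by (simp add: field_simps)
      ultimately show ?thesis by simp
    qed
    have iFG: "set_integrable lborel {0<..} (\<lambda>s. F s * G s)" by (rule holder_int[OF pq gF gG])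
    have iP: "set_integrable lborel {0<..} (\<lambda>s. \<bar>F s\<bar> powr p)" using gF unfolding good_def by simp
    have iQ: "set_integrable lborel {0<..} (\<lambda>s. \<bar>G s\<bar> powr q)" using gG unfolding good_def by simp
    have "\<bar>LBINT s:{0<..}. F s * G s\<bar> \<le> (LBINT s:{0<..}. \<bar>F s * G s\<bar>)"
      using set_integral_norm_bound[OF iFG] by simp
    also have "\<dots> \<le> (LBINT s:{0<..}. (a*b/(p*A)) * \<bar>F s\<bar> powr p + (a*b/(q*B)) * \<bar>G s\<bar> powr q)"
      by (rule set_integral_mono[OF set_integrable_abs[OF iFG]]) (use iP iQ pt in auto)
    also have "\<dots> = (a*b/(p*A)) * A + (a*b/(q*B)) * B"
      unfolding A_def B_def
      by (subst set_integral_add(2)) (use iP iQ in auto)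
    also have "\<dots> = a * b * (1/p + 1/q)" using Ap Bp by (simp add: field_simps)
    also have "\<dots> = nF p F * nF q G" using pq unfolding a_def b_def A_def B_def nF_def by simp
    finally show ?thesis .
  qed
qed

lemma cauchy_pair:
  assumes pq: "p > 1" "q > 1" "1/p + 1/q = 1"
    and gF: "\<And>n. good p (F n)" and gG: "\<And>n. good q (G n)"
    and gdF: "\<And>m n. good p (\<lambda>s. F m s - F n s)" and gdG: "\<And>m n. good q (\<lambda>s. G m s - G n s)"
    and cF: "\<And>e. e > 0 \<Longrightarrow> \<exists>N. \<forall>m\<ge>N. \<forall>n\<ge>N. nF p (\<lambda>s. F m s - F n s) < e"
    and cG: "\<And>e. e > 0 \<Longrightarrow> \<exists>N. \<forall>m\<ge>N. \<forall>n\<ge>N. nF q (\<lambda>s. G m s - G n s) < e"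
  shows "convergent (\<lambda>n. LBINT s:{0<..}. F n s * G n s)"
proof -
  obtain N1F where N1F: "\<And>m n. m \<ge> N1F \<Longrightarrow> n \<ge> N1F \<Longrightarrow> nF p (\<lambda>s. F m s - F n s) < 1"
    using cF[of 1] by auto
  obtain N1G where N1G: "\<And>m n. m \<ge> N1G \<Longrightarrow> n \<ge> N1G \<Longrightarrow> nF q (\<lambda>s. G m s - G n s) < 1"
    using cG[of 1] by auto
  define N1 where "N1 = max N1F N1G"
  define KF where "KF = nF p (F N1) + 1"
  define KG where "KG = nF q (G N1) + 1"
  have KF: "KF \<ge> 1" "KF > 0" unfolding KF_def using nF_nonneg[of p "F N1"] by auto
  have KG: "KG \<ge> 1" "KG > 0" unfolding KG_def using nF_nonneg[of q "G N1"] by auto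
  have hint: "\<And>X Y. good p X \<Longrightarrow> good q Y \<Longrightarrow> set_integrable lborel {0<..} (\<lambda>s. X s * Y s)"
    by (rule holder_int[OF pq])
  have hb: "\<And>X Y. good p X \<Longrightarrow> good q Y \<Longrightarrow> \<bar>LBINT s:{0<..}. X s * Y s\<bar> \<le> nF p X * nF q Y"
    by (rule holder[OF pq])
  show ?thesis unfolding Cauchy_convergent_iff[symmetric]
  proof (rule CauchyI)
    fix e :: real assume e: "e > 0"
    obtain N2F where N2F: "\<And>m n. m \<ge> N2F \<Longrightarrow> n \<ge> N2F \<Longrightarrow> nF p (\<lambda>s. F m s - F n s) < e / (2*KG)"
      using cF[of "e/(2*KG)"] e KG by auto
    obtain N2G where N2G: "\<And>m n. m \<ge> N2G \<Longrightarrow> n \<ge> N2G \<Longrightarrow> nF q (\<lambda>s. G m s - G n s) < e / (2*KF)"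
      using cG[of "e/(2*KF)"] e KF by auto
    define M where "M = max N1 (max N2F N2G)"
    have "\<forall>n\<ge>M. \<forall>m\<ge>M. norm ((LBINT s:{0<..}. F n s * G n s) - (LBINT s:{0<..}. F m s * G m s)) < e"
    proof (intro allI impI)
      fix n m assume n: "n \<ge> M" and m: "m \<ge> M"
      define T1 where "T1 = (\<lambda>s. (F n s - F m s) * (G n s - G N1 s))"
      define T2 where "T2 = (\<lambda>s. (F n s - F m s) * G N1 s)"
      define T3 where "T3 = (\<lambda>s. (F m s - F N1 s) * (G n s - G m s))"
      define T4 where "T4 = (\<lambda>s. F N1 s * (G n s - G m s))"
      have i1: "set_integrable lborel {0<..} T1" unfolding T1_def by (rule hint[OF gdF gdG])
      have i2: "set_integrable lborel {0<..} T2" unfolding T2_def by (rule hint[OF gdF gG])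
      have i3: "set_integrable lborel {0<..} T3" unfolding T3_def by (rule hint[OF gdF gdG])
      have i4: "set_integrable lborel {0<..} T4" unfolding T4_def by (rule hint[OF gF gdG])
      have b1: "\<bar>LBINT s:{0<..}. T1 s\<bar> \<le> nF p (\<lambda>s. F n s - F m s) * 1"
      proof -
        have "\<bar>LBINT s:{0<..}. T1 s\<bar> \<le> nF p (\<lambda>s. F n s - F m s) * nF q (\<lambda>s. G n s - G N1 s)"
          unfolding T1_def by (rule hb[OF gdF gdG])
        also have "\<dots> \<le> nF p (\<lambda>s. F n s - F m s) * 1"
          using N1G[of n N1] n nF_nonneg[of p "\<lambda>s. F n s - F m s"]
          by (intro mult_left_mono) (auto simp: M_def N1_def)
        finally show ?thesis .
      qed
      have b2: "\<bar>LBINT s:{0<..}. T2 s\<bar> \<le> nF p (\<lambda>s. F n s - F m s) * nF q (G N1)"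
        unfolding T2_def by (rule hb[OF gdF gG])
      have b3: "\<bar>LBINT s:{0<..}. T3 s\<bar> \<le> 1 * nF q (\<lambda>s. G n s - G m s)"
      proof -
        have "\<bar>LBINT s:{0<..}. T3 s\<bar> \<le> nF p (\<lambda>s. F m s - F N1 s) * nF q (\<lambda>s. G n s - G m s)"
          unfolding T3_def by (rule hb[OF gdF gdG])
        also have "\<dots> \<le> 1 * nF q (\<lambda>s. G n s - G m s)"
          using N1F[of m N1] m nF_nonneg[of q "\<lambda>s. G n s - G m s"]
          by (intro mult_right_mono) (auto simp: M_def N1_def)
        finally show ?thesis .
      qed
      have b4: "\<bar>LBINT s:{0<..}. T4 s\<bar> \<le> nF p (F N1) * nF q (\<lambda>s. G n s - G m s)"
        unfolding T4_def by (rule hb[OF gF gdG])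
      have dF: "nF p (\<lambda>s. F n s - F m s) < e / (2*KG)" using N2F n m by (auto simp: M_def)
      have dG: "nF q (\<lambda>s. G n s - G m s) < e / (2*KF)" using N2G n m by (auto simp: M_def)
      have split: "(LBINT s:{0<..}. F n s * G n s) - (LBINT s:{0<..}. F m s * G m s)
          = (LBINT s:{0<..}. T1 s) + (LBINT s:{0<..}. T2 s) + (LBINT s:{0<..}. T3 s) + (LBINT s:{0<..}. T4 s)"
      proof -
        have "(LBINT s:{0<..}. F n s * G n s) - (LBINT s:{0<..}. F m s * G m s)
            = (LBINT s:{0<..}. F n s * G n s - F m s * G m s)"
          by (rule set_integral_diff(2)[symmetric]) (intro hint gF gG)+
        also have "\<dots> = (LBINT s:{0<..}. T1 s + T2 s + T3 s + T4 s)"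
          unfolding T1_def T2_def T3_def T4_def by (rule arg_cong[where f = "set_lebesgue_integral _ _"]) (auto simp: fun_eq_iff algebra_simps)
        also have "\<dots> = (LBINT s:{0<..}. T1 s) + (LBINT s:{0<..}. T2 s) + (LBINT s:{0<..}. T3 s) + (LBINT s:{0<..}. T4 s)"
          using i1 i2 i3 i4 by (simp add: set_integral_add)
        finally show ?thesis .
      qed
      have "\<bar>(LBINT s:{0<..}. F n s * G n s) - (LBINT s:{0<..}. F m s * G m s)\<bar>
          \<le> nF p (\<lambda>s. F n s - F m s) * KG + KF * nF q (\<lambda>s. G n s - G m s)"
        unfolding split KF_def KG_def using b1 b2 b3 b4 by (simp add: algebra_simps)
      also have "\<dots> < e / (2*KG) * KG + KF * (e / (2*KF))"
        using dF dG KF KG nF_nonneg[of p "\<lambda>s. F n s - F m s"] nF_nonneg[of q "\<lambda>s. G n s - G m s"]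
        by (intro add_strict_mono mult_strict_right_mono mult_strict_left_mono) auto
      also have "\<dots> = e" using KF KG by (simp add: field_simps)
      finally show "norm ((LBINT s:{0<..}. F n s * G n s) - (LBINT s:{0<..}. F m s * G m s)) < e" by simp
    qed
    thus "\<exists>M. \<forall>m\<ge>M. \<forall>n\<ge>M. norm ((LBINT s:{0<..}. F m s * G m s) - (LBINT s:{0<..}. F n s * G n s)) < e"
      by blast
  qed
qed



lemma good_cong:
  assumes "\<And>s. s > 0 \<Longrightarrow> F s = G s"
  shows "good q F \<longleftrightarrow> good q G"
proof -
  have "(\<lambda>x. indicator {0<..} x *\<^sub>R F x) = (\<lambda>x. indicator {0<..} x *\<^sub>R G x)"
    using assms by (auto simp: fun_eq_iff indicator_def)
  moreover have "set_integrable lborel {0<..} (\<lambda>s. \<bar>F s\<bar> powr q) = set_integrable lborel {0<..} (\<lambda>s. \<bar>G s\<bar> powr q)"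
    by (rule set_integrable_cong) (use assms in auto)
  ultimately show ?thesis unfolding good_def set_borel_measurable_def by simp
qed

lemma nF_cong:
  assumes "\<And>s. s > 0 \<Longrightarrow> F s = G s"
  shows "nF q F = nF q G"
proof -
  have "(LBINT s:{0<..}. \<bar>F s\<bar> powr q) = (LBINT s:{0<..}. \<bar>G s\<bar> powr q)"
    by (rule set_lebesgue_integral_cong) (use assms in auto)
  thus ?thesis unfolding nF_def by simp
qed

lemma WDa_decay:
  assumes "sw D f" "\<alpha> \<ge> 0"
  shows "\<exists>C. \<forall>s>0. \<bar>WD D \<alpha> s * s powr \<alpha>\<bar> \<le> C / (1+s)^2"
proof -
  obtain N :: nat where N: "\<alpha> \<le> real N" using real_arch_simple by blast
  obtain C where C: "\<And>s. s > 0 \<Longrightarrow> \<bar>WD D \<alpha> s\<bar> \<le> C / (1+s)^(N+2)"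
    using WD_decay[OF assms, of "N+2"] by blast
  have "\<bar>WD D \<alpha> s * s powr \<alpha>\<bar> \<le> C / (1+s)^2" if s: "s > 0" for s
  proof -
    have "s powr \<alpha> \<le> (1+s) powr \<alpha>" using s assms by (intro powr_mono2) auto
    also have "\<dots> \<le> (1+s) powr real N" using s N by (intro powr_mono) auto
    also have "\<dots> = (1+s)^N" using s by (simp add: powr_realpow)
    finally have sp: "s powr \<alpha> \<le> (1+s)^N" .
    have "\<bar>WD D \<alpha> s * s powr \<alpha>\<bar> = \<bar>WD D \<alpha> s\<bar> * s powr \<alpha>" by (simp add: abs_mult)
    also have "\<dots> \<le> C / (1+s)^(N+2) * (1+s)^N"
      using C[OF s] sp by (intro mult_mono) (auto intro: order_trans[OF abs_ge_zero])
    also have "\<dots> = C / (1+s)^2"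
    proof -
      have "(1+s)^N > 0" "(1+s)^2 > 0" using s by auto
      thus ?thesis by (simp add: power_add power2_eq_square)
    qed
    finally show ?thesis .
  qed
  thus ?thesis by blast
qed

lemma good_WD:
  assumes "sw D f" "\<alpha> \<ge> 0" "q \<ge> 1"
  shows "good q (\<lambda>s. WD D \<alpha> s * s powr \<alpha>)"
  unfolding good_def
proof
  have cont: "continuous_on {0<..} (\<lambda>s. WD D \<alpha> s * s powr \<alpha>)"
    by (intro continuous_on_mult WD_cont[OF assms(1,2)]) (auto intro!: continuous_intros)
  have m: "(\<lambda>x. indicator {0<..} x *\<^sub>R (WD D \<alpha> x * x powr \<alpha>)) \<in> borel_measurable borel"
    by (rule borel_measurable_continuous_on_indicator[OF _ cont]) simp
  thus mm: "set_borel_measurable lborel {0<..} (\<lambda>s. WD D \<alpha> s * s powr \<alpha>)"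
    unfolding set_borel_measurable_def by simp
  obtain C where C: "\<And>s. s > 0 \<Longrightarrow> \<bar>WD D \<alpha> s * s powr \<alpha>\<bar> \<le> C / (1+s)^2"
    using WDa_decay[OF assms(1,2)] by blast
  show "set_integrable lborel {0<..} (\<lambda>s. \<bar>WD D \<alpha> s * s powr \<alpha>\<bar> powr q)"
  proof (rule set_integrable_bound[OF set_integrable_mult_right[OF ker_int[of 1]]])
    have "(\<lambda>x. \<bar>indicator {0<..} x *\<^sub>R (WD D \<alpha> x * x powr \<alpha>)\<bar> powr q) \<in> borel_measurable borel"
      using m by measurable
    moreover have "(\<lambda>x. \<bar>indicator {0<..} x *\<^sub>R (WD D \<alpha> x * x powr \<alpha>)\<bar> powr q)
        = (\<lambda>x. indicator {0<..} x *\<^sub>R (\<bar>WD D \<alpha> x * x powr \<alpha>\<bar> powr q))"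
      using assms(3) by (auto simp: fun_eq_iff indicator_def)
    ultimately show "set_borel_measurable lborel {0<..} (\<lambda>s. \<bar>WD D \<alpha> s * s powr \<alpha>\<bar> powr q)"
      unfolding set_borel_measurable_def by simp
    show "AE x in lborel. x \<in> {0<..} \<longrightarrow> norm (\<bar>WD D \<alpha> x * x powr \<alpha>\<bar> powr q)
        \<le> norm (\<bar>C\<bar> powr q * (x powr (1 - 1) / (1 + x)^2))"
    proof (intro AE_I2 impI)
      fix x :: real assume "x \<in> {0<..}"
      hence x: "x > 0" by simp
      have "\<bar>WD D \<alpha> x * x powr \<alpha>\<bar> \<le> \<bar>C\<bar> / (1+x)^2"
        using C[OF x] x by (smt (verit) divide_right_mono zero_le_power2)
      hence "\<bar>WD D \<alpha> x * x powr \<alpha>\<bar> powr q \<le> (\<bar>C\<bar> / (1+x)^2) powr q"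
        using assms(3) by (intro powr_mono2) auto
      also have "\<dots> = \<bar>C\<bar> powr q / ((1+x)^2) powr q" by (simp add: powr_divide)
      also have "\<dots> \<le> \<bar>C\<bar> powr q / ((1+x)^2) powr 1"
      proof (rule divide_left_mono)
        have "1 \<le> (1+x)^2" using x by (simp add: one_le_power)
        thus "((1+x)^2) powr 1 \<le> ((1+x)^2) powr q" using assms(3) by (intro powr_mono) auto
      qed (use x in auto)
      also have "\<dots> = \<bar>C\<bar> powr q * (x powr (1 - 1) / (1 + x)^2)" using x by simp
      finally show "norm (\<bar>WD D \<alpha> x * x powr \<alpha>\<bar> powr q) \<le> norm (\<bar>C\<bar> powr q * (x powr (1 - 1) / (1 + x)^2))"
        using x by simp
    qed
  qed auto
qed

lemma tnorm_eq:
  assumes "sw D h" "\<alpha> \<ge> 0" "p > 0"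
  shows "tnorm \<alpha> p h = nF p (\<lambda>s. WD D \<alpha> s * s powr \<alpha>) / Gamma (\<alpha>+1)"
proof -
  have "(LBINT s:{0<..}. \<bar>weyl_der \<alpha> h s\<bar> powr p * s powr (\<alpha> * p))
      = (LBINT s:{0<..}. \<bar>WD D \<alpha> s * s powr \<alpha>\<bar> powr p)"
  proof (rule set_lebesgue_integral_cong)
    show "({0<..}::real set) \<in> sets lborel" by simp
    show "\<forall>s. s \<in> {0<..} \<longrightarrow> \<bar>weyl_der \<alpha> h s\<bar> powr p * s powr (\<alpha> * p) = \<bar>WD D \<alpha> s * s powr \<alpha>\<bar> powr p"
    proof (intro allI impI)
      fix s :: real assume "s \<in> {0<..}"
      hence s: "s > 0" by simp
      have "\<bar>WD D \<alpha> s * s powr \<alpha>\<bar> powr p = (\<bar>WD D \<alpha> s\<bar> * s powr \<alpha>) powr p" by (simp add: abs_mult)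
      also have "\<dots> = \<bar>WD D \<alpha> s\<bar> powr p * s powr (\<alpha> * p)" by (simp add: powr_mult powr_powr)
      finally show "\<bar>weyl_der \<alpha> h s\<bar> powr p * s powr (\<alpha> * p) = \<bar>WD D \<alpha> s * s powr \<alpha>\<bar> powr p"
        using weyl_der_eq[OF assms(1,2) s] by simp
    qed
  qed
  thus ?thesis unfolding tnorm_def nF_def by simp
qed

lemma nF_scale:
  assumes "a > 0" "c > 0" "q > 0"
  shows "nF q (\<lambda>s. a * c powr \<alpha> * W (c * s) * s powr \<alpha>) = a * c powr (-1/q) * nF q (\<lambda>s. W s * s powr \<alpha>)"
proof -
  define \<phi> where "\<phi> = (\<lambda>v. \<bar>W v * v powr \<alpha>\<bar> powr q)"
  have I0: "(LBINT v:{0<..}. \<phi> v) \<ge> 0" unfolding set_lebesgue_integral_def \<phi>_def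
    by (intro Bochner_Integration.integral_nonneg) (auto simp: indicator_def)
  have "(LBINT s:{0<..}. \<bar>a * c powr \<alpha> * W (c * s) * s powr \<alpha>\<bar> powr q) = (LBINT s:{0<..}. a powr q * \<phi> (c * s))"
  proof (rule set_lebesgue_integral_cong)
    show "({0<..}::real set) \<in> sets lborel" by simp
    show "\<forall>s. s \<in> {0<..} \<longrightarrow> \<bar>a * c powr \<alpha> * W (c * s) * s powr \<alpha>\<bar> powr q = a powr q * \<phi> (c * s)"
    proof (intro allI impI)
      fix s :: real assume "s \<in> {0<..}"
      hence s: "s > 0" by simp
      have "(c * s) powr \<alpha> = c powr \<alpha> * s powr \<alpha>" using s assms by (simp add: powr_mult)
      hence "\<bar>a * c powr \<alpha> * W (c * s) * s powr \<alpha>\<bar> = a * \<bar>W (c * s) * (c * s) powr \<alpha>\<bar>"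
        using assms s by (simp add: abs_mult mult_ac)
      thus "\<bar>a * c powr \<alpha> * W (c * s) * s powr \<alpha>\<bar> powr q = a powr q * \<phi> (c * s)"
        unfolding \<phi>_def using assms by (simp add: powr_mult)
    qed
  qed
  also have "\<dots> = a powr q * ((LBINT v:{0<..}. \<phi> v) / c)"
    using subst_scale[OF assms(2), of \<phi>] by simp
  finally have eq: "(LBINT s:{0<..}. \<bar>a * c powr \<alpha> * W (c * s) * s powr \<alpha>\<bar> powr q) = a powr q * ((LBINT v:{0<..}. \<phi> v) / c)" .
  have "(a powr q * ((LBINT v:{0<..}. \<phi> v) / c)) powr (1/q)
      = (a powr q) powr (1/q) * ((LBINT v:{0<..}. \<phi> v) powr (1/q) / c powr (1/q))"
    by (simp add: powr_mult powr_divide)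
  also have "(a powr q) powr (1/q) = a" using assms by (simp add: powr_powr)
  also have "(LBINT v:{0<..}. \<phi> v) powr (1/q) / c powr (1/q) = c powr (-1/q) * (LBINT v:{0<..}. \<phi> v) powr (1/q)"
    by (simp add: powr_minus_divide)
  finally show ?thesis unfolding nF_def eq \<phi>_def by (simp add: mult_ac)
qed



lemma pair_swap:
  fixes U V :: "real \<Rightarrow> real"
  assumes c: "c > 0" "c2 > 0" "c * c2 = 1"
    and K: "a2 * c2 powr \<alpha> = c2 * (a * c powr \<alpha>) * c2 powr (2*\<alpha>)"
  shows "(LBINT s:{0<..}. U s * s powr \<alpha> * (a * c powr \<alpha> * V (c * s) * s powr \<alpha>))
       = (LBINT s:{0<..}. a2 * c2 powr \<alpha> * U (c2 * s) * V s * s powr (2*\<alpha>))"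
proof -
  define \<psi> where "\<psi> = (\<lambda>s. U s * s powr \<alpha> * (a * c powr \<alpha> * V (c * s) * s powr \<alpha>))"
  have "(LBINT s:{0<..}. \<psi> (c2 * s)) = (LBINT s:{0<..}. \<psi> s) / c2" by (rule subst_scale[OF c(2)])
  hence "(LBINT s:{0<..}. \<psi> s) = c2 * (LBINT s:{0<..}. \<psi> (c2 * s))" using c by (simp add: field_simps)
  also have "\<dots> = (LBINT s:{0<..}. c2 * \<psi> (c2 * s))" by simp
  also have "\<dots> = (LBINT s:{0<..}. a2 * c2 powr \<alpha> * U (c2 * s) * V s * s powr (2*\<alpha>))"
  proof (rule set_lebesgue_integral_cong)
    show "({0<..}::real set) \<in> sets lborel" by simp
    show "\<forall>s. s \<in> {0<..} \<longrightarrow> c2 * \<psi> (c2 * s) = a2 * c2 powr \<alpha> * U (c2 * s) * V s * s powr (2*\<alpha>)"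
    proof (intro allI impI)
      fix s :: real assume "s \<in> {0<..}"
      hence s: "s > 0" by simp
      have e1: "c * (c2 * s) = s" using c by (simp add: mult.assoc[symmetric])
      have e2: "(c2 * s) powr \<alpha> = c2 powr \<alpha> * s powr \<alpha>" using c s by (simp add: powr_mult)
      have e3: "c2 powr \<alpha> * c2 powr \<alpha> = c2 powr (2*\<alpha>)" by (simp add: powr_add[symmetric])
      have e4: "s powr \<alpha> * s powr \<alpha> = s powr (2*\<alpha>)" by (simp add: powr_add[symmetric])
      have "c2 * \<psi> (c2 * s) = (c2 * (a * c powr \<alpha>) * (c2 powr \<alpha> * c2 powr \<alpha>)) * U (c2 * s) * V s * (s powr \<alpha> * s powr \<alpha>)"
        unfolding \<psi>_def e1 e2 by (simp add: mult_ac)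
      also have "\<dots> = a2 * c2 powr \<alpha> * U (c2 * s) * V s * s powr (2*\<alpha>)"
        unfolding e3 e4 K by simp
      finally show "c2 * \<psi> (c2 * s) = a2 * c2 powr \<alpha> * U (c2 * s) * V s * s powr (2*\<alpha>)" .
    qed
  qed
  finally show ?thesis unfolding \<psi>_def .
qed

lemma exp_powr': "exp (x::real) powr y = exp (x * y)"
  by (simp add: powr_def mult.commute)

theorem proposition2p7:
  fixes \<alpha> p p' t :: real and f g :: "nat \<Rightarrow> real \<Rightarrow> real"
  assumes "\<alpha> \<ge> 0" and "1 < p" and "1 / p + 1 / p' = 1" and "t \<ge> 0"
    and "tcauchy \<alpha> p f" and "tcauchy \<alpha> p' g"
  shows "\<exists>L. (\<lambda>n. tpair \<alpha> (Tpos t p (f n)) (g n)) \<longlonglongrightarrow> L \<and>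
             (\<lambda>n. tpair \<alpha> (f n) (Tneg t p' (g n))) \<longlonglongrightarrow> L"
proof -
  note a0 = assms(1)
  have p'1: "p' > 1"
  proof -
    have i: "1/p' = 1 - 1/p" using assms(3) by simp
    have "0 < 1/p" "1/p < 1" using assms(2) by auto
    hence h: "0 < 1/p'" "1/p' < 1" using i by auto
    hence "p' > 0" by (simp add: zero_less_divide_1_iff)
    thus ?thesis using h(2) by (simp add: field_simps)
  qed
  have pp: "1/p + 1/p' = 1" by (rule assms(3))
  have "\<forall>n. \<exists>D. sw D (f n)" using assms(5) unfolding tcauchy_def schwartz_sw by blast
  then obtain Df where Df: "\<And>n. sw (Df n) (f n)" by metis
  have "\<forall>n. \<exists>D. sw D (g n)" using assms(6) unfolding tcauchy_def schwartz_sw by blast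
  then obtain Dg where Dg: "\<And>n. sw (Dg n) (g n)" by metis
  define a where "a = exp (t/p')"
  define c where "c = exp t"
  define a2 where "a2 = exp (-t/p)"
  define c2 where "c2 = exp (-t)"
  have ac: "a > 0" "c > 0" "a2 > 0" "c2 > 0" "c * c2 = 1"
    unfolding a_def c_def a2_def c2_def by (auto simp: exp_add[symmetric])
  define F where "F = (\<lambda>n s. WD (Df n) \<alpha> s * s powr \<alpha>)"
  define G where "G = (\<lambda>n s. a * c powr \<alpha> * WD (Dg n) \<alpha> (c * s) * s powr \<alpha>)"
  define I where "I = (\<lambda>n. LBINT s:{0<..}. F n s * G n s)"
  define Dd where "Dd = (\<lambda>m n k s. Dg m k s - Dg n k s)"
  define Df_d where "Df_d = (\<lambda>m n k s. Df m k s - Df n k s)"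
  have swDd: "sw (Dd m n) (\<lambda>s. g m s - g n s)" for m n unfolding Dd_def by (rule sw_diff[OF Dg Dg])
  have swDfd: "sw (Df_d m n) (\<lambda>s. f m s - f n s)" for m n unfolding Df_d_def by (rule sw_diff[OF Df Df])
  have Tneg_eq: "Tneg t p' (g n) = (\<lambda>s. a * g n (c * s))" for n
    unfolding Tneg_def a_def c_def by (simp add: fun_eq_iff)
  have swTn: "sw (\<lambda>k s. a * c^k * Dg n k (c * s)) (Tneg t p' (g n))" for n
    unfolding Tneg_eq by (rule sw_scale[OF Dg ac(2)])
  have Tpos_eq: "Tpos t p (f n) = (\<lambda>s. a2 * f n (c2 * s))" for n
    unfolding Tpos_def a2_def c2_def by (simp add: fun_eq_iff)
  have swTp: "sw (\<lambda>k s. a2 * c2^k * Df n k (c2 * s)) (Tpos t p (f n))" for n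
    unfolding Tpos_eq by (rule sw_scale[OF Df ac(4)])
  have A_eq: "tpair \<alpha> (f n) (Tneg t p' (g n)) = I n / (Gamma (\<alpha>+1))^2" for n
  proof -
    have "(LBINT s:{0<..}. weyl_der \<alpha> (f n) s * weyl_der \<alpha> (Tneg t p' (g n)) s * s powr (2 * \<alpha>))
        = I n"
      unfolding I_def
    proof (rule set_lebesgue_integral_cong)
      show "({0<..}::real set) \<in> sets lborel" by simp
      show "\<forall>s. s \<in> {0<..} \<longrightarrow> weyl_der \<alpha> (f n) s * weyl_der \<alpha> (Tneg t p' (g n)) s * s powr (2 * \<alpha>) = F n s * G n s"
      proof (intro allI impI)
        fix s :: real assume "s \<in> {0<..}"
        hence s: "s > 0" by simp
        have "weyl_der \<alpha> (Tneg t p' (g n)) s = a * c powr \<alpha> * WD (Dg n) \<alpha> (c * s)"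
          using weyl_der_eq[OF swTn a0 s] WD_scale[OF ac(2) a0] by simp
        moreover have "weyl_der \<alpha> (f n) s = WD (Df n) \<alpha> s" by (rule weyl_der_eq[OF Df a0 s])
        moreover have "s powr (2 * \<alpha>) = s powr \<alpha> * s powr \<alpha>" by (simp add: powr_add[symmetric])
        ultimately show "weyl_der \<alpha> (f n) s * weyl_der \<alpha> (Tneg t p' (g n)) s * s powr (2 * \<alpha>) = F n s * G n s"
          unfolding F_def G_def by (simp add: mult_ac)
      qed
    qed
    thus ?thesis unfolding tpair_def by (simp add: field_simps)
  qed
  have K: "a2 * c2 powr \<alpha> = c2 * (a * c powr \<alpha>) * c2 powr (2*\<alpha>)"
  proof -
    have h: "t/p + t/p' = t" using arg_cong[OF pp, of "\<lambda>x. t*x"] by (simp add: distrib_left)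
    have "-t/p + (-t) * \<alpha> = -t + (t/p' + t * \<alpha>) + (-t) * (2*\<alpha>)" using h by (simp add: algebra_simps)
    thus ?thesis unfolding a_def c_def a2_def c2_def exp_powr' by (simp add: exp_add[symmetric])
  qed
  have B_eq: "tpair \<alpha> (Tpos t p (f n)) (g n) = I n / (Gamma (\<alpha>+1))^2" for n
  proof -
    have "(LBINT s:{0<..}. weyl_der \<alpha> (Tpos t p (f n)) s * weyl_der \<alpha> (g n) s * s powr (2 * \<alpha>))
        = (LBINT s:{0<..}. a2 * c2 powr \<alpha> * WD (Df n) \<alpha> (c2 * s) * WD (Dg n) \<alpha> s * s powr (2*\<alpha>))"
    proof (rule set_lebesgue_integral_cong)
      show "({0<..}::real set) \<in> sets lborel" by simp
      show "\<forall>s. s \<in> {0<..} \<longrightarrow> weyl_der \<alpha> (Tpos t p (f n)) s * weyl_der \<alpha> (g n) s * s powr (2 * \<alpha>)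
          = a2 * c2 powr \<alpha> * WD (Df n) \<alpha> (c2 * s) * WD (Dg n) \<alpha> s * s powr (2*\<alpha>)"
      proof (intro allI impI)
        fix s :: real assume "s \<in> {0<..}"
        hence s: "s > 0" by simp
        have "weyl_der \<alpha> (Tpos t p (f n)) s = a2 * c2 powr \<alpha> * WD (Df n) \<alpha> (c2 * s)"
          using weyl_der_eq[OF swTp a0 s] WD_scale[OF ac(4) a0] by simp
        moreover have "weyl_der \<alpha> (g n) s = WD (Dg n) \<alpha> s" by (rule weyl_der_eq[OF Dg a0 s])
        ultimately show "weyl_der \<alpha> (Tpos t p (f n)) s * weyl_der \<alpha> (g n) s * s powr (2 * \<alpha>)
          = a2 * c2 powr \<alpha> * WD (Df n) \<alpha> (c2 * s) * WD (Dg n) \<alpha> s * s powr (2*\<alpha>)" by simp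
      qed
    qed
    also have "\<dots> = I n"
      unfolding I_def F_def G_def by (rule pair_swap[OF ac(2,4,5) K, symmetric])
    finally show ?thesis unfolding tpair_def by (simp add: field_simps)
  qed
  have gF: "good p (F n)" for n unfolding F_def using assms(2) by (intro good_WD[OF Df a0]) auto
  have gG: "good p' (G n)" for n
  proof -
    have "good p' (\<lambda>s. WD (\<lambda>k s. a * c^k * Dg n k (c * s)) \<alpha> s * s powr \<alpha>)"
      using p'1 by (intro good_WD[OF swTn a0]) auto
    moreover have "WD (\<lambda>k s. a * c^k * Dg n k (c * s)) \<alpha> s * s powr \<alpha> = G n s" for s
      unfolding G_def using WD_scale[OF ac(2) a0] by simp
    ultimately show ?thesis by simp
  qed
  have gdF: "good p (\<lambda>s. F m s - F n s)" for m n
  proof -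
    have "good p (\<lambda>s. WD (Df_d m n) \<alpha> s * s powr \<alpha>)"
      using assms(2) by (intro good_WD[OF swDfd a0]) auto
    moreover have eq: "F m s - F n s = WD (Df_d m n) \<alpha> s * s powr \<alpha>" if "s > 0" for s
    proof -
      have "WD (Df_d m n) \<alpha> s = WD (Df m) \<alpha> s - WD (Df n) \<alpha> s"
        unfolding Df_d_def by (rule WD_diff[OF Df Df a0 that])
      thus ?thesis unfolding F_def by (simp only: left_diff_distrib)
    qed
    ultimately show ?thesis using good_cong[of "\<lambda>s. F m s - F n s", OF eq] by simp
  qed
  have Gd: "G m s - G n s = a * c powr \<alpha> * WD (Dd m n) \<alpha> (c * s) * s powr \<alpha>" if "s > 0" for m n s
  proof -
    have "c * s > 0" using ac that by simp
    hence "WD (Dd m n) \<alpha> (c * s) = WD (Dg m) \<alpha> (c * s) - WD (Dg n) \<alpha> (c * s)"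
      unfolding Dd_def by (rule WD_diff[OF Dg Dg a0])
    thus ?thesis unfolding G_def by (simp only: right_diff_distrib left_diff_distrib)
  qed
  have gdG: "good p' (\<lambda>s. G m s - G n s)" for m n
  proof -
    have "good p' (\<lambda>s. WD (\<lambda>k s. a * c^k * Dd m n k (c * s)) \<alpha> s * s powr \<alpha>)"
      using p'1 by (intro good_WD[OF sw_scale[OF swDd ac(2)] a0]) auto
    moreover have eq: "G m s - G n s = WD (\<lambda>k s. a * c^k * Dd m n k (c * s)) \<alpha> s * s powr \<alpha>" if "s > 0" for s
      using WD_scale[OF ac(2) a0] Gd[OF that] by simp
    ultimately show ?thesis using good_cong[of "\<lambda>s. G m s - G n s", OF eq] by simp
  qed
  have Gpos: "Gamma (\<alpha>+1) > 0" using a0 by (intro Gamma_real_pos) auto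
  have cF: "\<exists>N. \<forall>m\<ge>N. \<forall>n\<ge>N. nF p (\<lambda>s. F m s - F n s) < e" if e: "e > 0" for e
  proof -
    obtain N where N: "\<forall>m\<ge>N. \<forall>n\<ge>N. tnorm \<alpha> p (\<lambda>s. f m s - f n s) < e / Gamma (\<alpha>+1)"
      using assms(5) e Gpos unfolding tcauchy_def by (meson divide_pos_pos)
    have "nF p (\<lambda>s. F m s - F n s) = Gamma (\<alpha>+1) * tnorm \<alpha> p (\<lambda>s. f m s - f n s)" for m n
    proof -
      have "nF p (\<lambda>s. F m s - F n s) = nF p (\<lambda>s. WD (Df_d m n) \<alpha> s * s powr \<alpha>)"
      proof (rule nF_cong)
        fix s :: real assume s: "s > 0"
        have "WD (Df_d m n) \<alpha> s = WD (Df m) \<alpha> s - WD (Df n) \<alpha> s"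
          unfolding Df_d_def by (rule WD_diff[OF Df Df a0 s])
        thus "F m s - F n s = WD (Df_d m n) \<alpha> s * s powr \<alpha>" unfolding F_def by (simp only: left_diff_distrib)
      qed
      thus ?thesis using tnorm_eq[OF swDfd a0, of p m n] assms(2) Gpos by simp
    qed
    hence "\<forall>m\<ge>N. \<forall>n\<ge>N. nF p (\<lambda>s. F m s - F n s) < e"
      using N Gpos by (simp add: pos_less_divide_eq mult.commute)
    thus ?thesis by blast
  qed
  define \<kappa> where "\<kappa> = a * c powr (-1/p') * Gamma (\<alpha>+1)"
  have kp: "\<kappa> > 0" unfolding \<kappa>_def using ac Gpos by simp
  have cG: "\<exists>N. \<forall>m\<ge>N. \<forall>n\<ge>N. nF p' (\<lambda>s. G m s - G n s) < e" if e: "e > 0" for e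
  proof -
    obtain N where N: "\<forall>m\<ge>N. \<forall>n\<ge>N. tnorm \<alpha> p' (\<lambda>s. g m s - g n s) < e / \<kappa>"
      using assms(6) e kp unfolding tcauchy_def by (meson divide_pos_pos)
    have "nF p' (\<lambda>s. G m s - G n s) = \<kappa> * tnorm \<alpha> p' (\<lambda>s. g m s - g n s)" for m n
    proof -
      have "nF p' (\<lambda>s. G m s - G n s) = nF p' (\<lambda>s. a * c powr \<alpha> * WD (Dd m n) \<alpha> (c * s) * s powr \<alpha>)"
        using Gd by (intro nF_cong) auto
      also have "\<dots> = a * c powr (-1/p') * nF p' (\<lambda>s. WD (Dd m n) \<alpha> s * s powr \<alpha>)"
        using ac p'1 by (intro nF_scale) auto
      also have "nF p' (\<lambda>s. WD (Dd m n) \<alpha> s * s powr \<alpha>) = Gamma (\<alpha>+1) * tnorm \<alpha> p' (\<lambda>s. g m s - g n s)"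
        using tnorm_eq[OF swDd a0, of p' m n] p'1 Gpos by simp
      finally show ?thesis unfolding \<kappa>_def by (simp add: mult_ac)
    qed
    hence "\<forall>m\<ge>N. \<forall>n\<ge>N. nF p' (\<lambda>s. G m s - G n s) < e"
      using N kp by (simp add: pos_less_divide_eq mult.commute)
    thus ?thesis by blast
  qed
  have "convergent I"
    unfolding I_def
    by (rule cauchy_pair[OF assms(2) p'1 pp gF gG gdF gdG cF cG])
  then obtain L0 where L0: "I \<longlonglongrightarrow> L0" by (auto simp: convergent_def)
  have lim: "(\<lambda>n. I n / (Gamma (\<alpha>+1))^2) \<longlonglongrightarrow> L0 / (Gamma (\<alpha>+1))^2"
    by (rule tendsto_divide[OF L0 tendsto_const]) (use Gpos in simp)
  show ?thesis
    using lim unfolding A_eq[symmetric] B_eq[symmetric]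
    by (intro exI[of _ "L0 / (Gamma (\<alpha>+1))^2"]) (simp add: A_eq B_eq)
qed


end
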